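(* Let $A$ be an $n\times n$ real symmetric matrix, let $\alpha \subseteq \{1,\dots,n\}$ be a set of P-vertices of $A$, and let $\beta \subseteq \{1,\dots,n\}$ be such that $\alpha \subseteq \beta$ and the rows of $A$ indexed by $\beta$ form a basis of the row space of $A$. If $\alpha$ is a P-set of the principal submatrix $A[\beta]$ (with indices of $\alpha$ understood as indices of $A[\beta]$), then $\alpha$ is a P-set of $A$.
   Context: All matrices are real. $A[\beta]$ denotes the principal submatrix of $A$ with rows and columns indexed by $\beta$. For an $n\times n$ matrix $A$ and $\alpha \subseteq \{1,\dots,n\}$, $A(\alpha)$ denotes the principal submatrix obtained by deleting the rows and columns indexed by $\alpha$, and $\nu(A)$ denotes the nullity of $A$. Index $i$ is a P-vertex of $A$ if $\nu(A(\{i\})) = \nu(A)+1$. A set $\alpha$ is a P-set of $A$ if $\nu(A(\alpha)) = \nu(A) + |\alpha|$. *)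

theory Defs
  imports "Jordan_Normal_Form.DL_Submatrix" "Jordan_Normal_Form.VS_Connect"
          "Jordan_Normal_Form.Matrix_Kernel"
begin

text \<open>Matrices are JNF matrices; indices are 0-based, i.e. the index set is {0..<n}.\<close>

definition nullity :: "real mat \<Rightarrow> nat" where
  "nullity A = kernel_dim A"

definition del_princ :: "real mat \<Rightarrow> nat set \<Rightarrow> real mat" where
  "del_princ A \<alpha> = submatrix A (- \<alpha>) (- \<alpha>)"

text \<open>A[beta]: principal submatrix on rows/columns beta (reindexed to 0..<card).\<close>
definition princ_sub :: "real mat \<Rightarrow> nat set \<Rightarrow> real mat" where
  "princ_sub A \<beta> = submatrix A \<beta> \<beta>"

text \<open>Position of index a inside the (ordered) index set beta, i.e. the index of a
  as an index of A[beta].\<close>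
definition pos_in :: "nat set \<Rightarrow> nat \<Rightarrow> nat" where
  "pos_in \<beta> a = card {b \<in> \<beta>. b < a}"

definition P_vertex :: "real mat \<Rightarrow> nat \<Rightarrow> bool" where
  "P_vertex A i \<longleftrightarrow> i < dim_row A \<and> nullity (del_princ A {i}) = nullity A + 1"

definition P_set :: "real mat \<Rightarrow> nat set \<Rightarrow> bool" where
  "P_set A \<alpha> \<longleftrightarrow> \<alpha> \<subseteq> {..<dim_row A} \<and> nullity (del_princ A \<alpha>) = nullity A + card \<alpha>"

definition rows_basis :: "real mat \<Rightarrow> nat set \<Rightarrow> bool" where
  "rows_basis A \<beta> \<longleftrightarrow> \<beta> \<subseteq> {..<dim_row A} \<and> inj_on (row A) \<beta>
     \<and> module.lin_indpt class_ring (module_vec TYPE(real) (dim_col A)) (row A ` \<beta>)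
     \<and> module.span class_ring (module_vec TYPE(real) (dim_col A)) (row A ` \<beta>)
         = vec_space.row_space (dim_col A) A"

end

theory Submission
  imports Defs
begin


lemma kdim_rank_nullity:
  fixes M C B :: "real mat"
  assumes M: "M \<in> carrier_mat nr c" and C: "C \<in> carrier_mat nr' c" and B: "B \<in> carrier_mat k c"
   and ker: "mat_kernel C = {x \<in> mat_kernel M. B *\<^sub>v x = 0\<^sub>v k}"
  shows "kernel_dim M = kernel_dim C + vectorspace.dim class_ring ((module_vec TYPE(real) k)\<lparr>carrier := (\<lambda>x. B *\<^sub>v x) ` mat_kernel M\<rparr>)"
proof -
  interpret KM: kernel nr c M by (unfold_locales, rule M)
  interpret KC: kernel nr' c C by (unfold_locales, rule C)
  interpret W: vec_space "TYPE(real)" k .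
  have hom: "(\<lambda>x. B *\<^sub>v x) \<in> LinearCombinations.module_hom class_ring KM.VK W.V"
    using M B mat_kernel_carrier[OF M]
    apply (auto simp: module_hom_def mult_mat_vec)
    apply (rule mult_add_distrib_mat_vec[OF B]) by auto
  interpret L: linear_map class_ring KM.VK W.V "\<lambda>x. B *\<^sub>v x"
    using KM.Ker.vectorspace_axioms W.vectorspace_axioms hom
    by (simp add: linear_map_def mod_hom_def mod_hom_axioms_def vectorspace_def)
  obtain bs where bs: "finite bs" "KM.basis bs" using kernel_basis_exists[OF M] by auto
  have fd: "KM.Ker.fin_dim" unfolding KM.Ker.fin_dim_def using bs unfolding KM.Ker.basis_def by auto
  note rn = L.rank_nullity[OF fd]
  have kerT: "L.kerT = mat_kernel C" unfolding L.ker_def ker by auto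
  have imT: "L.imT = (\<lambda>x. B *\<^sub>v x) ` mat_kernel M" unfolding L.im_def by auto
  show ?thesis using rn unfolding kerT imT KM.kernel_dim KC.kernel_dim by simp
qed


lemma vec_subspace_dim:
  fixes X :: "real vec set"
  assumes X: "subspace class_ring X (module_vec TYPE(real) k)"
  shows "vectorspace.fin_dim class_ring ((module_vec TYPE(real) k)\<lparr>carrier := X\<rparr>)"
    and "vectorspace.dim class_ring ((module_vec TYPE(real) k)\<lparr>carrier := X\<rparr>) \<le> k"
    and "vectorspace.dim class_ring ((module_vec TYPE(real) k)\<lparr>carrier := X\<rparr>) = k \<Longrightarrow> X = carrier_vec k"
proof -
  interpret W: vec_space "TYPE(real)" k .
  interpret VX: vectorspace class_ring "W.vs X" using W.subspace_is_vs[OF X] .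
  have sm: "submodule class_ring X W.V" using X unfolding subspace_def by auto
  have Xc: "X \<subseteq> carrier_vec k" using sm unfolding submodule_def by auto
  have li: "W.lin_indpt A" if "A \<subseteq> X" "VX.lin_indpt A" for A
    using W.span_li_not_depend(2)[OF that(1) sm] that(2) by simp
  have bnd: "finite A \<and> card A \<le> k" if "A \<subseteq> carrier (W.vs X) \<and> VX.lin_indpt A" for A
  proof -
    have "A \<subseteq> X" "W.lin_indpt A" using that li by auto
    with W.li_le_dim[OF W.fin_dim, of A] Xc show ?thesis by (auto simp: W.dim_is_n)
  qed
  obtain A where A: "finite A" "maximal A (\<lambda>S. S \<subseteq> carrier (W.vs X) \<and> VX.lin_indpt S)"
    using maximal_exists[of "\<lambda>S. S \<subseteq> carrier (W.vs X) \<and> VX.lin_indpt S" k "{}", OF bnd]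
    unfolding VX.lin_dep_def by auto
  have gen: "VX.gen_set A" by (rule VX.max_li_is_gen[OF A(2)])
  have Asub: "A \<subseteq> carrier (W.vs X)" using A(2) unfolding maximal_def by auto
  show fd: "VX.fin_dim" unfolding VX.fin_dim_def using A(1) gen Asub by auto
  obtain b where b: "finite b" "VX.basis b" using VX.finite_basis_exists[OF fd] by auto
  have "b \<subseteq> carrier (W.vs X) \<and> VX.lin_indpt b" using b(2) unfolding VX.basis_def by auto
  from bnd[OF this] show "VX.dim \<le> k" using VX.dim_basis[OF b] by simp
  assume dk: "VX.dim = k"
  have cb: "card b = k" using VX.dim_basis[OF b] dk by simp
  have bX: "b \<subseteq> X" "VX.lin_indpt b" using b(2) unfolding VX.basis_def by auto
  have "W.basis b" 
    apply (rule W.dim_li_is_basis[OF W.fin_dim b(1)])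
    using bX Xc li cb by (auto simp: W.dim_is_n)
  hence "W.span b = carrier_vec k" unfolding W.basis_def by auto
  moreover have "W.span b \<subseteq> X" using W.span_is_subset[OF bX(1) sm] .
  ultimately show "X = carrier_vec k" using Xc by auto
qed


lemma module_vec_upd_carrier: "(module_vec TYPE(real) k)\<lparr>carrier := carrier_vec k\<rparr> = module_vec TYPE(real) k"
  by (rule partial_object.equality) (simp_all add: module_vec_simps)

lemma kdim_split:
  fixes M C B :: "real mat"
  assumes M: "M \<in> carrier_mat nr c" and C: "C \<in> carrier_mat nr' c" and B: "B \<in> carrier_mat k c"
   and ker: "mat_kernel C = {x \<in> mat_kernel M. B *\<^sub>v x = 0\<^sub>v k}"
  shows "kernel_dim M \<le> kernel_dim C + k"
   and "(\<forall>v\<in>carrier_vec k. \<exists>x\<in>mat_kernel M. B *\<^sub>v x = v) \<Longrightarrow> kernel_dim M = kernel_dim C + k"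
   and "kernel_dim M = kernel_dim C + k \<Longrightarrow> \<forall>v\<in>carrier_vec k. \<exists>x\<in>mat_kernel M. B *\<^sub>v x = v"
proof -
  interpret KM: kernel nr c M by (unfold_locales, rule M)
  interpret W: vec_space "TYPE(real)" k .
  have hom: "(\<lambda>x. B *\<^sub>v x) \<in> LinearCombinations.module_hom class_ring KM.VK W.V"
    using M B mat_kernel_carrier[OF M]
    apply (auto simp: module_hom_def mult_mat_vec)
    apply (rule mult_add_distrib_mat_vec[OF B]) by auto
  interpret L: linear_map class_ring KM.VK W.V "\<lambda>x. B *\<^sub>v x"
    using KM.Ker.vectorspace_axioms W.vectorspace_axioms hom
    by (simp add: linear_map_def mod_hom_def mod_hom_axioms_def vectorspace_def)
  have sub: "subspace class_ring ((\<lambda>x. B *\<^sub>v x) ` mat_kernel M) (module_vec TYPE(real) k)"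
    using L.imT_is_subspace unfolding L.im_def by simp
  note eq = kdim_rank_nullity[OF M C B ker]
  note vd = vec_subspace_dim[OF sub]
  show "kernel_dim M \<le> kernel_dim C + k" using eq vd(2) by simp
  {
    assume surj: "\<forall>v\<in>carrier_vec k. \<exists>x\<in>mat_kernel M. B *\<^sub>v x = v"
    have img: "(\<lambda>x. B *\<^sub>v x) ` mat_kernel M = carrier_vec k"
      using surj B mat_kernel_carrier[OF M] by force
    have e: "(module_vec TYPE(real) k)\<lparr>carrier := carrier_vec k\<rparr> = module_vec TYPE(real) k"
      by (rule module_vec_upd_carrier)
    have "vectorspace.dim class_ring ((module_vec TYPE(real) k)\<lparr>carrier := (\<lambda>x. B *\<^sub>v x) ` mat_kernel M\<rparr>) = k"
      unfolding img e by (rule W.dim_is_n)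
    then show "kernel_dim M = kernel_dim C + k" using eq by simp
  }
  {
    assume h: "kernel_dim M = kernel_dim C + k"
    have "vectorspace.dim class_ring ((module_vec TYPE(real) k)\<lparr>carrier := (\<lambda>x. B *\<^sub>v x) ` mat_kernel M\<rparr>) = k"
      using eq h by linarith
    then have "(\<lambda>x. B *\<^sub>v x) ` mat_kernel M = carrier_vec k" by (rule vd(3))
    then show "\<forall>v\<in>carrier_vec k. \<exists>x\<in>mat_kernel M. B *\<^sub>v x = v" by (metis imageE)
  }
qed


lemma pick_props:
  assumes "s < card {a. a < n \<and> a \<in> J}"
  shows "pick J s \<in> J" "pick J s < n" "pos_in J (pick J s) = s"
proof -
  let ?Jn = "{a. a < n \<and> a \<in> J}"
  have eq: "pick J s = pick ?Jn s" by (rule pick_reduce_set[OF assms])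
  have "pick ?Jn s \<in> ?Jn" by (rule pick_in_set_le[OF assms])
  then show j: "pick J s \<in> J" "pick J s < n" using eq by auto
  have "card {a \<in> ?Jn. a < pick ?Jn s} = s" by (rule card_pick_le[OF assms])
  moreover have "{a \<in> ?Jn. a < pick ?Jn s} = {a \<in> J. a < pick J s}" using j eq by auto
  ultimately show "pos_in J (pick J s) = s" unfolding pos_in_def by simp
qed

lemma pos_props:
  assumes "t \<in> J" "t < n"
  shows "pos_in J t < card {a. a < n \<and> a \<in> J}" "pick J (pos_in J t) = t"
proof -
  have "{a \<in> J. a < t} \<subset> {a. a < n \<and> a \<in> J}" using assms by auto
  then show "pos_in J t < card {a. a < n \<and> a \<in> J}" unfolding pos_in_def
    by (intro psubset_card_mono) auto
  show "pick J (pos_in J t) = t" unfolding pos_in_def using pick_card_in_set[OF assms(1)] .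
qed

lemma pick_UNIV: "pick UNIV s = s"
proof -
  have "card {a \<in> (UNIV::nat set). a < s} = s" by simp
  then show ?thesis using pick_card_in_set[of s UNIV] by simp
qed

lemma card_UNIV_lt: "card {i. i < (n::nat) \<and> i \<in> UNIV} = n" by simp

definition emb :: "nat set \<Rightarrow> nat \<Rightarrow> real vec \<Rightarrow> real vec" where
  "emb J n y = vec n (\<lambda>t. if t \<in> J then y $ pos_in J t else 0)"

definition rst :: "nat set \<Rightarrow> nat \<Rightarrow> real vec \<Rightarrow> real vec" where
  "rst J n x = vec (card {a. a < n \<and> a \<in> J}) (\<lambda>s. x $ pick J s)"

lemma emb_carrier[simp]: "emb J n y \<in> carrier_vec n" unfolding emb_def by simp
lemma emb_dim[simp]: "dim_vec (emb J n y) = n" unfolding emb_def by simp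
lemma emb_index: "t < n \<Longrightarrow> emb J n y $ t = (if t \<in> J then y $ pos_in J t else 0)"
  unfolding emb_def by simp
lemma emb_pick: "s < card {a. a < n \<and> a \<in> J} \<Longrightarrow> emb J n y $ pick J s = y $ s"
  using pick_props[of s n J] by (simp add: emb_index)
lemma rst_carrier[simp]: "rst J n x \<in> carrier_vec (card {a. a < n \<and> a \<in> J})" unfolding rst_def by simp
lemma rst_index: "s < card {a. a < n \<and> a \<in> J} \<Longrightarrow> rst J n x $ s = x $ pick J s"
  unfolding rst_def by simp

lemma rst_emb: "y \<in> carrier_vec (card {a. a < n \<and> a \<in> J}) \<Longrightarrow> rst J n (emb J n y) = y"
  by (intro eq_vecI) (auto simp: rst_index emb_pick)

lemma emb_rst: assumes "x \<in> carrier_vec n" "\<And>t. t < n \<Longrightarrow> t \<notin> J \<Longrightarrow> x $ t = 0"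
  shows "emb J n (rst J n x) = x"
proof (intro eq_vecI)
  fix t assume "t < dim_vec x"
  then have t: "t < n" using assms by auto
  show "emb J n (rst J n x) $ t = x $ t"
  proof (cases "t \<in> J")
    case True
    then show ?thesis using pos_props[OF True t] t by (simp add: emb_index rst_index)
  next
    case False
    then show ?thesis using assms t by (simp add: emb_index)
  qed
qed (use assms in auto)

lemma bij_pick: "bij_betw (pick J) {..<card {a. a < n \<and> a \<in> J}} {a. a < n \<and> a \<in> J}"
proof (rule bij_betw_imageI)
  show "inj_on (pick J) {..<card {a. a < n \<and> a \<in> J}}"
    by (intro inj_onI) (metis lessThan_iff pick_props(3))
  show "pick J ` {..<card {a. a < n \<and> a \<in> J}} = {a. a < n \<and> a \<in> J}"
  proof
    show "pick J ` {..<card {a. a < n \<and> a \<in> J}} \<subseteq> {a. a < n \<and> a \<in> J}"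
      using pick_props(1,2) by auto
    show "{a. a < n \<and> a \<in> J} \<subseteq> pick J ` {..<card {a. a < n \<and> a \<in> J}}"
    proof
      fix t assume "t \<in> {a. a < n \<and> a \<in> J}"
      then have t: "t \<in> J" "t < n" by auto
      show "t \<in> pick J ` {..<card {a. a < n \<and> a \<in> J}}"
        using pos_props[OF t] by (metis image_eqI lessThan_iff)
    qed
  qed
qed

lemma mult_submatrix_emb:
  assumes M: "M \<in> carrier_mat nr nc" and y: "y \<in> carrier_vec (card {j. j < nc \<and> j \<in> J})"
    and s: "s < card {i. i < nr \<and> i \<in> I}"
  shows "(submatrix M I J *\<^sub>v y) $ s = (M *\<^sub>v emb J nc y) $ (pick I s)"
proof -
  let ?m = "card {j. j < nc \<and> j \<in> J}"
  let ?Jn = "{j. j < nc \<and> j \<in> J}"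
  let ?p = "pick I s"
  have p: "?p < nr" using pick_props[OF s] by auto
  have dims: "dim_row (submatrix M I J) = card {i. i < nr \<and> i \<in> I}"
     "dim_col (submatrix M I J) = ?m" using M by (auto simp: dim_submatrix)
  have "(submatrix M I J *\<^sub>v y) $ s = (\<Sum>j<?m. M $$ (?p, pick J j) * y $ j)"
    using s y dims M
    by (auto simp: scalar_prod_def submatrix_index lessThan_atLeast0 intro!: sum.cong)
  also have "\<dots> = (\<Sum>j<?m. M $$ (?p, pick J j) * y $ pos_in J (pick J j))"
    using pick_props(3) by (intro sum.cong) auto
  also have "\<dots> = (\<Sum>t\<in>?Jn. M $$ (?p, t) * y $ pos_in J t)"
    by (rule sum.reindex_bij_betw[OF bij_pick])
  also have "\<dots> = (\<Sum>t<nc. M $$ (?p, t) * (if t \<in> J then y $ pos_in J t else 0))"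
    by (rule sum.mono_neutral_cong_left) auto
  also have "\<dots> = (M *\<^sub>v emb J nc y) $ ?p"
    using M p by (auto simp: scalar_prod_def emb_index lessThan_atLeast0 intro!: sum.cong)
  finally show ?thesis .
qed



lemma mult_zero_iff:
  assumes "N \<in> carrier_mat a b" "y \<in> carrier_vec b"
  shows "N *\<^sub>v y = 0\<^sub>v a \<longleftrightarrow> (\<forall>i<a. (N *\<^sub>v y) $ i = 0)"
  using assms by (auto simp: vec_eq_iff)

lemma ker_split:
  fixes M :: "real mat"
  assumes M: "M \<in> carrier_mat nr nc"
  shows "mat_kernel (submatrix M UNIV J) = {y \<in> mat_kernel (submatrix M (-I) J).
           submatrix M I J *\<^sub>v y = 0\<^sub>v (card {i. i < nr \<and> i \<in> I})}"
proof -
  let ?m = "card {j. j < nc \<and> j \<in> J}"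
  let ?a = "card {i. i < nr \<and> i \<in> -I}"
  let ?b = "card {i. i < nr \<and> i \<in> I}"
  have c1: "submatrix M UNIV J \<in> carrier_mat nr ?m" using M by (intro carrier_matI) (auto simp: dim_submatrix)
  have c2: "submatrix M (-I) J \<in> carrier_mat ?a ?m" using M by (intro carrier_matI) (auto simp: dim_submatrix)
  have c3: "submatrix M I J \<in> carrier_mat ?b ?m" using M by (intro carrier_matI) (auto simp: dim_submatrix)
  have "y \<in> mat_kernel (submatrix M UNIV J) \<longleftrightarrow>
        y \<in> mat_kernel (submatrix M (-I) J) \<and> submatrix M I J *\<^sub>v y = 0\<^sub>v ?b" for y
  proof (cases "y \<in> carrier_vec ?m")
    case False
    then show ?thesis using mat_kernel_carrier[OF c1] mat_kernel_carrier[OF c2] by auto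
  next
    case y: True
    have e1: "y \<in> mat_kernel (submatrix M UNIV J) \<longleftrightarrow> (\<forall>r<nr. (M *\<^sub>v emb J nc y) $ r = 0)"
      unfolding mat_kernel[OF c1] using y mult_zero_iff[OF c1 y]
        mult_submatrix_emb[OF M y, of _ UNIV] by (simp add: pick_UNIV)
    have e2: "y \<in> mat_kernel (submatrix M (-I) J) \<longleftrightarrow> (\<forall>s<?a. (M *\<^sub>v emb J nc y) $ pick (-I) s = 0)"
      unfolding mat_kernel[OF c2] using y mult_zero_iff[OF c2 y]
        mult_submatrix_emb[OF M y, of _ "-I"] by simp
    have e3: "submatrix M I J *\<^sub>v y = 0\<^sub>v ?b \<longleftrightarrow> (\<forall>s<?b. (M *\<^sub>v emb J nc y) $ pick I s = 0)"
      using y mult_zero_iff[OF c3 y] mult_submatrix_emb[OF M y, of _ I] by simp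
    show ?thesis unfolding e1 e2 e3
    proof (intro iffI conjI allI impI)
      fix s assume "\<forall>r<nr. (M *\<^sub>v emb J nc y) $ r = 0" "s < ?a"
      then show "(M *\<^sub>v emb J nc y) $ pick (-I) s = 0" using pick_props(2)[of s nr "-I"] by auto
    next
      fix s assume "\<forall>r<nr. (M *\<^sub>v emb J nc y) $ r = 0" "s < ?b"
      then show "(M *\<^sub>v emb J nc y) $ pick I s = 0" using pick_props(2)[of s nr I] by auto
    next
      fix r assume h: "(\<forall>s<?a. (M *\<^sub>v emb J nc y) $ pick (-I) s = 0) \<and> (\<forall>s<?b. (M *\<^sub>v emb J nc y) $ pick I s = 0)"
        and r: "r < nr"
      show "(M *\<^sub>v emb J nc y) $ r = 0"
      proof (cases "r \<in> I")
        case True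
        then show ?thesis using h pos_props[OF True r] by metis
      next
        case False
        then have "r \<in> -I" by simp
        then show ?thesis using h pos_props[OF _ r, of "-I"] by metis
      qed
    qed
  qed
  then show ?thesis by auto
qed

lemma mult_zero_vec': "A \<in> carrier_mat a b \<Longrightarrow> A *\<^sub>v 0\<^sub>v b = (0\<^sub>v a :: real vec)"
  by (intro eq_vecI) auto

lemma kernel_dim_one: "kernel_dim (1\<^sub>m n :: real mat) = 0"
  unfolding kernel_dim_def using kernel_one_mat(1)[of n] by simp

lemma kernel_dim_eqI:
  assumes "mat_kernel A = mat_kernel B" "dim_col A = dim_col B"
  shows "kernel_dim A = kernel_dim B"
  using assms unfolding kernel_dim_def by simp

lemma kdim_restrict:
  fixes M D :: "real mat"
  assumes M: "M \<in> carrier_mat nr n" and D: "D \<in> carrier_mat nd n"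
    and kD: "mat_kernel D = {x \<in> mat_kernel M. \<forall>t<n. t \<notin> J \<longrightarrow> x $ t = 0}"
  shows "kernel_dim (submatrix M UNIV J) = kernel_dim D"
proof -
  let ?m = "card {j. j < n \<and> j \<in> J}"
  define R where "R = mat ?m n (\<lambda>(s,t). if t = pick J s then 1 else (0::real))"
  have R: "R \<in> carrier_mat ?m n" unfolding R_def by simp
  have Rx: "R *\<^sub>v x = rst J n x" if x: "x \<in> carrier_vec n" for x
  proof (intro eq_vecI)
    fix s assume "s < dim_vec (rst J n x)"
    then have s: "s < ?m" unfolding rst_def by simp
    have p: "pick J s < n" using pick_props(2)[OF s] .
    have "(R *\<^sub>v x) $ s = (\<Sum>t<n. (if t = pick J s then 1 else 0) * x $ t)"
      using s x unfolding R_def by (auto simp: scalar_prod_def lessThan_atLeast0 intro!: sum.cong)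
    also have "\<dots> = (\<Sum>t<n. if t = pick J s then x $ t else 0)" by (intro sum.cong) auto
    also have "\<dots> = x $ pick J s" using p by (simp add: sum.delta)
    finally show "(R *\<^sub>v x) $ s = rst J n x $ s" using s by (simp add: rst_index)
  qed (use R in \<open>auto simp: rst_def\<close>)
  have I: "1\<^sub>m n \<in> carrier_mat n n" by simp
  have kerI: "mat_kernel (1\<^sub>m n :: real mat) = {0\<^sub>v n}" unfolding mat_kernel[OF I] by auto
  have ker: "mat_kernel (1\<^sub>m n) = {x \<in> mat_kernel D. R *\<^sub>v x = 0\<^sub>v ?m}"
  proof -
    have "x = 0\<^sub>v n" if x: "x \<in> mat_kernel D" and Rx0: "R *\<^sub>v x = 0\<^sub>v ?m" for x
    proof -
      have xc: "x \<in> carrier_vec n" using mat_kernel_carrier[OF D] x by auto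
      have z: "\<forall>t<n. t \<notin> J \<longrightarrow> x $ t = 0" using x kD by auto
      have r0: "rst J n x = 0\<^sub>v ?m" using Rx0 Rx[OF xc] by simp
      show ?thesis
      proof (intro eq_vecI)
        fix t assume "t < dim_vec (0\<^sub>v n :: real vec)" hence t: "t < n" by simp
        show "x $ t = 0\<^sub>v n $ t"
        proof (cases "t \<in> J")
          case True
          have "x $ t = rst J n x $ pos_in J t" using pos_props[OF True t] by (simp add: rst_index)
          also have "\<dots> = 0" using r0 pos_props(1)[OF True t] by simp
          finally show ?thesis using t by simp
        next
          case False then show ?thesis using z t by simp
        qed
      qed (use xc in auto)
    qed
    moreover have "0\<^sub>v n \<in> mat_kernel D" by (rule mat_kernelI[OF D]) (auto simp: mult_zero_vec'[OF D])
    ultimately show ?thesis unfolding kerI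
      using mult_zero_vec'[OF R] by blast
  qed
  have img: "(\<lambda>x. R *\<^sub>v x) ` mat_kernel D = mat_kernel (submatrix M UNIV J)"
  proof
    have cS: "submatrix M UNIV J \<in> carrier_mat n' ?m" if "n' = nr" for n'
      using M that by (intro carrier_matI) (auto simp: dim_submatrix)
    show "(\<lambda>x. R *\<^sub>v x) ` mat_kernel D \<subseteq> mat_kernel (submatrix M UNIV J)"
    proof
      fix y assume "y \<in> (\<lambda>x. R *\<^sub>v x) ` mat_kernel D"
      then obtain x where x: "x \<in> mat_kernel D" and yx: "y = R *\<^sub>v x" by auto
      have xc: "x \<in> carrier_vec n" using mat_kernel_carrier[OF D] x by auto
      have z: "\<And>t. t < n \<Longrightarrow> t \<notin> J \<Longrightarrow> x $ t = 0" using x kD by auto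
      have Mx: "M *\<^sub>v x = 0\<^sub>v nr" using x kD mat_kernelD[OF M] by auto
      have y: "y = rst J n x" using yx Rx[OF xc] by simp
      have yc: "y \<in> carrier_vec ?m" using y by simp
      have "emb J n y = x" using y emb_rst[OF xc z] by simp
      show "y \<in> mat_kernel (submatrix M UNIV J)"
      proof (rule mat_kernelI[OF cS[OF refl] yc])
        show "submatrix M UNIV J *\<^sub>v y = 0\<^sub>v nr"
          using mult_submatrix_emb[OF M yc, of _ UNIV] \<open>emb J n y = x\<close> Mx cS[OF refl]
          by (intro eq_vecI) (auto simp: pick_UNIV)
      qed
    qed
    show "mat_kernel (submatrix M UNIV J) \<subseteq> (\<lambda>x. R *\<^sub>v x) ` mat_kernel D"
    proof
      fix y assume y: "y \<in> mat_kernel (submatrix M UNIV J)"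
      have yc: "y \<in> carrier_vec ?m" using mat_kernelD(1)[OF cS[OF refl] y] .
      have Sy: "submatrix M UNIV J *\<^sub>v y = 0\<^sub>v nr" using mat_kernelD(2)[OF cS[OF refl] y] .
      let ?x = "emb J n y"
      have Mx: "M *\<^sub>v ?x = 0\<^sub>v nr"
      proof (intro eq_vecI)
        fix r assume "r < dim_vec (0\<^sub>v nr :: real vec)"
        then have r: "r < nr" by simp
        have "(submatrix M UNIV J *\<^sub>v y) $ r = (M *\<^sub>v ?x) $ r"
          using mult_submatrix_emb[OF M yc, of r UNIV] r by (simp add: pick_UNIV)
        then show "(M *\<^sub>v ?x) $ r = 0\<^sub>v nr $ r" using Sy r by simp
      qed (use M in auto)
      have "?x \<in> mat_kernel D" unfolding kD
        using Mx by (auto intro!: mat_kernelI[OF M] simp: emb_index)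
      moreover have "R *\<^sub>v ?x = y" using Rx[of ?x] rst_emb[OF yc] by simp
      ultimately show "y \<in> (\<lambda>x. R *\<^sub>v x) ` mat_kernel D" by (metis image_eqI)
    qed
  qed
  note eq = kdim_rank_nullity[OF D I R ker]
  have "kernel_dim (submatrix M UNIV J) = vectorspace.dim class_ring ((module_vec TYPE(real) ?m)\<lparr>carrier := mat_kernel (submatrix M UNIV J)\<rparr>)"
    unfolding kernel_dim_def using M by (simp add: dim_submatrix)
  moreover have "kernel_dim D = vectorspace.dim class_ring ((module_vec TYPE(real) ?m)\<lparr>carrier := mat_kernel (submatrix M UNIV J)\<rparr>)"
    using eq unfolding img kernel_dim_one by linarith
  ultimately show ?thesis by linarith
qed



definition zrows :: "real mat \<Rightarrow> nat set \<Rightarrow> real mat" where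
  "zrows M S = mat (dim_row M + dim_col M) (dim_col M)
     (\<lambda>(r,c). if r < dim_row M then M $$ (r,c) else if c = r - dim_row M \<and> c \<in> S then 1 else 0)"

lemma zrows_carrier: "M \<in> carrier_mat nr n \<Longrightarrow> zrows M S \<in> carrier_mat (nr + n) n"
  unfolding zrows_def by auto

lemma zrows_ker:
  assumes M: "M \<in> carrier_mat nr n"
  shows "mat_kernel (zrows M S) = {x \<in> mat_kernel M. \<forall>t<n. t \<in> S \<longrightarrow> x $ t = 0}"
proof -
  have Z: "zrows M S \<in> carrier_mat (nr + n) n" by (rule zrows_carrier[OF M])
  have idx: "(zrows M S *\<^sub>v x) $ r = (if r < nr then (M *\<^sub>v x) $ r else if r - nr \<in> S then x $ (r - nr) else 0)"
    if x: "x \<in> carrier_vec n" and r: "r < nr + n" for x r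
  proof (cases "r < nr")
    case True
    then show ?thesis using M x r unfolding zrows_def by (auto simp: scalar_prod_def)
  next
    case False
    have "(zrows M S *\<^sub>v x) $ r = (\<Sum>c<n. (if c = r - nr \<and> c \<in> S then 1 else 0) * x $ c)"
      using M x r False unfolding zrows_def
      by (auto simp: scalar_prod_def lessThan_atLeast0 intro!: sum.cong)
    also have "\<dots> = (\<Sum>c<n. if c = r - nr then (if c \<in> S then x $ c else 0) else 0)"
      by (intro sum.cong) auto
    also have "\<dots> = (if r - nr \<in> S then x $ (r - nr) else 0)"
    proof -
      have "r - nr < n" using r False by simp
      then show ?thesis by (simp add: sum.delta)
    qed
    finally show ?thesis using False by simp
  qed
  show ?thesis
  proof (intro equalityI subsetI)
    fix x assume x: "x \<in> mat_kernel (zrows M S)"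
    have xc: "x \<in> carrier_vec n" using mat_kernelD(1)[OF Z x] .
    have z: "zrows M S *\<^sub>v x = 0\<^sub>v (nr + n)" using mat_kernelD(2)[OF Z x] .
    have "M *\<^sub>v x = 0\<^sub>v nr"
    proof (intro eq_vecI)
      fix r assume "r < dim_vec (0\<^sub>v nr :: real vec)" hence r: "r < nr" by simp
      have "(zrows M S *\<^sub>v x) $ r = 0" using z r by simp
      then show "(M *\<^sub>v x) $ r = 0\<^sub>v nr $ r" using idx[OF xc, of r] r by simp
    qed (use M in auto)
    moreover have "x $ t = 0" if "t < n" "t \<in> S" for t
    proof -
      have "(zrows M S *\<^sub>v x) $ (nr + t) = 0" using z that by simp
      then show ?thesis using idx[OF xc, of "nr + t"] that by simp
    qed
    ultimately show "x \<in> {x \<in> mat_kernel M. \<forall>t<n. t \<in> S \<longrightarrow> x $ t = 0}"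
      using xc by (auto intro: mat_kernelI[OF M])
  next
    fix x assume x: "x \<in> {x \<in> mat_kernel M. \<forall>t<n. t \<in> S \<longrightarrow> x $ t = 0}"
    have xc: "x \<in> carrier_vec n" and Mx: "M *\<^sub>v x = 0\<^sub>v nr" using mat_kernelD[OF M] x by auto
    have "zrows M S *\<^sub>v x = 0\<^sub>v (nr + n)"
    proof (intro eq_vecI)
      fix r assume "r < dim_vec (0\<^sub>v (nr + n) :: real vec)" hence r: "r < nr + n" by simp
      show "(zrows M S *\<^sub>v x) $ r = 0\<^sub>v (nr + n) $ r"
        using idx[OF xc r] Mx x r by (auto simp: vec_eq_iff)
    qed (use Z in auto)
    then show "x \<in> mat_kernel (zrows M S)" by (rule mat_kernelI[OF Z xc])
  qed
qed

lemma sub_carrier: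
  fixes M :: "real mat"
  assumes "M \<in> carrier_mat nr nc"
  shows "submatrix M I J \<in> carrier_mat (card {i. i < nr \<and> i \<in> I}) (card {j. j < nc \<and> j \<in> J})"
  using assms by (intro carrier_matI) (auto simp: dim_submatrix)

lemma null_vanish:
  fixes A :: "real mat"
  assumes A: "A \<in> carrier_mat n n" and i: "i < n"
    and P: "nullity (del_princ A {i}) = nullity A + 1"
  shows "\<forall>x\<in>mat_kernel A. x $ i = 0"
proof (rule ccontr)
  assume "\<not> (\<forall>x\<in>mat_kernel A. x $ i = 0)"
  then obtain x0 where x0: "x0 \<in> mat_kernel A" "x0 $ i \<noteq> 0" by auto
  have x0c: "x0 \<in> carrier_vec n" and Ax0: "A *\<^sub>v x0 = 0\<^sub>v n" using mat_kernelD[OF A x0(1)] by auto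
  have c1: "card {j. j < n \<and> j \<in> {i}} = 1" using i by (simp add: Collect_conj_eq Int_absorb1)
  note ks = ker_split[OF A, of "-{i}" "{i}", unfolded c1]
  have le: "kernel_dim (submatrix A (-{i}) (-{i})) \<le> kernel_dim (submatrix A UNIV (-{i})) + 1"
    using kdim_split(1)[OF sub_carrier[OF A] sub_carrier[OF A] sub_carrier[OF A, of "{i}" "-{i}", unfolded c1] ks] .
  have kz: "mat_kernel (zrows A {i}) = {x \<in> mat_kernel A. \<forall>t<n. t \<notin> -{i} \<longrightarrow> x $ t = 0}"
    unfolding zrows_ker[OF A] by auto
  have r1: "kernel_dim (submatrix A UNIV (-{i})) = kernel_dim (zrows A {i})"
    by (rule kdim_restrict[OF A zrows_carrier[OF A] kz])
  define E where "E = mat 1 n (\<lambda>(r,c). if c = i then 1 else (0::real))"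
  have E: "E \<in> carrier_mat 1 n" unfolding E_def by simp
  have Ex: "(E *\<^sub>v x) $ 0 = x $ i" if "x \<in> carrier_vec n" for x
  proof -
    have "(E *\<^sub>v x) $ 0 = (\<Sum>c<n. (if c = i then 1 else 0) * x $ c)"
      using that unfolding E_def by (auto simp: scalar_prod_def lessThan_atLeast0 intro!: sum.cong)
    also have "\<dots> = (\<Sum>c<n. if c = i then x $ c else 0)" by (intro sum.cong) auto
    also have "\<dots> = x $ i" using i by (simp add: sum.delta)
    finally show ?thesis .
  qed
  have kz2: "mat_kernel (zrows A {i}) = {x \<in> mat_kernel A. E *\<^sub>v x = 0\<^sub>v 1}"
  proof -
    have "E *\<^sub>v x = 0\<^sub>v 1 \<longleftrightarrow> x $ i = 0" if "x \<in> carrier_vec n" for x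
      using Ex[OF that] E by (auto simp: vec_eq_iff)
    then show ?thesis unfolding zrows_ker[OF A] using mat_kernel_carrier[OF A] i by auto
  qed
  have surj: "\<forall>v\<in>carrier_vec 1. \<exists>x\<in>mat_kernel A. E *\<^sub>v x = v"
  proof
    fix v :: "real vec" assume v: "v \<in> carrier_vec 1"
    let ?x = "(v $ 0 / x0 $ i) \<cdot>\<^sub>v x0"
    have "?x \<in> mat_kernel A" by (rule mat_kernel_smult[OF A x0(1)])
    moreover have "E *\<^sub>v ?x = v"
    proof (intro eq_vecI)
      fix r assume "r < dim_vec v" hence r: "r = 0" using v by simp
      show "(E *\<^sub>v ?x) $ r = v $ r" unfolding r using Ex[of ?x] x0c x0(2) i by simp
    qed (use E v in auto)
    ultimately show "\<exists>x\<in>mat_kernel A. E *\<^sub>v x = v" by blast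
  qed
  have r2: "kernel_dim A = kernel_dim (zrows A {i}) + 1"
    by (rule kdim_split(2)[OF A zrows_carrier[OF A] E kz2 surj])
  have "kernel_dim (submatrix A (-{i}) (-{i})) = kernel_dim A + 1"
    using P unfolding nullity_def del_princ_def .
  then show False using le r1 r2 by linarith
qed



lemma RC:
  fixes A :: "real mat"
  assumes A: "A \<in> carrier_mat n n" and rb: "rows_basis A \<beta>" and j: "j < n"
  shows "\<exists>c. \<forall>col<n. A $$ (j,col) = (\<Sum>b\<in>\<beta>. c b * A $$ (b,col))"
proof -
  interpret V: vec_space "TYPE(real)" n .
  have dc: "dim_col A = n" "dim_row A = n" using A by auto
  have bn: "\<beta> \<subseteq> {..<n}" and inj: "inj_on (row A) \<beta>"
    and sp: "V.span (row A ` \<beta>) = V.row_space A" using rb unfolding rows_basis_def dc by auto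
  have fin: "finite \<beta>" using bn finite_subset by blast
  have rc: "row A ` \<beta> \<subseteq> carrier_vec n" using bn A by auto
  have "row A j \<in> set (rows A)" using j dc unfolding rows_def by auto
  moreover have "set (rows A) \<subseteq> carrier_vec n" using A set_rows_carrier by blast
  ultimately have "row A j \<in> V.row_space A" unfolding V.row_space_def using V.in_own_span by auto
  then have "row A j \<in> V.span (row A ` \<beta>)" using sp by simp
  then obtain a S where S: "row A j = V.lincomb a S" "finite S" "S \<subseteq> row A ` \<beta>"
    using V.in_spanE by blast
  define c where "c b = (if row A b \<in> S then a (row A b) else 0)" for b
  have "A $$ (j,col) = (\<Sum>b\<in>\<beta>. c b * A $$ (b,col))" if col: "col < n" for col
  proof -
    have "A $$ (j,col) = row A j $ col" using j col dc by simp
    also have "\<dots> = (\<Sum>x\<in>S. a x * x $ col)" unfolding S(1)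
      by (rule V.lincomb_index[OF col]) (use S rc in auto)
    also have "\<dots> = (\<Sum>x\<in>row A ` \<beta>. if x \<in> S then a x * x $ col else 0)"
    proof -
      have e: "row A ` \<beta> \<inter> S = S" using S(3) by auto
      show ?thesis using fin by (simp add: sum.inter_restrict[symmetric] e)
    qed
    also have "\<dots> = (\<Sum>b\<in>\<beta>. if row A b \<in> S then a (row A b) * row A b $ col else 0)"
      by (rule sum.reindex[OF inj, unfolded comp_def])
    also have "\<dots> = (\<Sum>b\<in>\<beta>. c b * A $$ (b,col))"
      using bn col dc unfolding c_def by (intro sum.cong) auto
    finally show ?thesis .
  qed
  then show ?thesis by blast
qed

lemma row_comb_mult:
  fixes A :: "real mat"
  assumes A: "A \<in> carrier_mat n n" and x: "x \<in> carrier_vec n"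
    and c: "\<forall>col<n. A $$ (j,col) = (\<Sum>b\<in>\<beta>. c b * A $$ (b,col))" and j: "j < n"
    and fin: "finite \<beta>" and bn: "\<beta> \<subseteq> {..<n}"
  shows "(A *\<^sub>v x) $ j = (\<Sum>b\<in>\<beta>. c b * (A *\<^sub>v x) $ b)"
proof -
  have "(A *\<^sub>v x) $ j = (\<Sum>col<n. A $$ (j,col) * x $ col)"
    using A x j by (auto simp: scalar_prod_def lessThan_atLeast0 intro!: sum.cong)
  also have "\<dots> = (\<Sum>col<n. \<Sum>b\<in>\<beta>. c b * A $$ (b,col) * x $ col)"
    using c by (simp add: sum_distrib_right)
  also have "\<dots> = (\<Sum>b\<in>\<beta>. \<Sum>col<n. c b * (A $$ (b,col) * x $ col))"
    by (subst sum.swap) (simp add: mult.assoc)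
  also have "\<dots> = (\<Sum>b\<in>\<beta>. c b * (A *\<^sub>v x) $ b)"
  proof (intro sum.cong refl)
    fix b assume "b \<in> \<beta>" hence b: "b < n" using bn by auto
    have "(A *\<^sub>v x) $ b = (\<Sum>col<n. A $$ (b,col) * x $ col)"
      using A x b by (auto simp: scalar_prod_def lessThan_atLeast0 intro!: sum.cong)
    then show "(\<Sum>col<n. c b * (A $$ (b,col) * x $ col)) = c b * (A *\<^sub>v x) $ b"
      by (simp add: sum_distrib_left)
  qed
  finally show ?thesis .
qed

lemma IND:
  fixes A :: "real mat"
  assumes A: "A \<in> carrier_mat n n" and sym: "A\<^sup>T = A" and rb: "rows_basis A \<beta>"
    and x: "x \<in> carrier_vec n" and Ax: "A *\<^sub>v x = 0\<^sub>v n"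
    and z: "\<forall>t<n. t \<notin> \<beta> \<longrightarrow> x $ t = 0"
  shows "\<forall>b\<in>\<beta>. x $ b = 0"
proof -
  interpret V: vec_space "TYPE(real)" n .
  have dc: "dim_col A = n" "dim_row A = n" using A by auto
  have bn: "\<beta> \<subseteq> {..<n}" and inj: "inj_on (row A) \<beta>"
    and li: "V.lin_indpt (row A ` \<beta>)" using rb unfolding rows_basis_def dc by auto
  have fin: "finite \<beta>" using bn finite_subset by blast
  have rc: "row A ` \<beta> \<subseteq> carrier_vec n" using bn A by auto
  define a where "a v = x $ (inv_into \<beta> (row A) v)" for v
  have av: "a (row A b) = x $ b" if "b \<in> \<beta>" for b unfolding a_def using inv_into_f_f[OF inj that] by simp
  have symA: "A $$ (b,col) = A $$ (col,b)" if "b < n" "col < n" for b col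
  proof -
    have "A\<^sup>T $$ (col,b) = A $$ (b,col)" using that A by simp
    then show ?thesis using sym by simp
  qed
  have lc: "V.lincomb a (row A ` \<beta>) = 0\<^sub>v n"
  proof (intro eq_vecI)
    fix col assume "col < dim_vec (0\<^sub>v n :: real vec)" hence col: "col < n" by simp
    have "V.lincomb a (row A ` \<beta>) $ col = (\<Sum>v\<in>row A ` \<beta>. a v * v $ col)"
      by (rule V.lincomb_index[OF col rc])
    also have "\<dots> = (\<Sum>b\<in>\<beta>. a (row A b) * row A b $ col)"
      by (rule sum.reindex[OF inj, unfolded comp_def])
    also have "\<dots> = (\<Sum>b\<in>\<beta>. A $$ (col,b) * x $ b)"
      using bn col dc av symA by (intro sum.cong) auto
    also have "\<dots> = (\<Sum>t<n. A $$ (col,t) * x $ t)"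
      using bn z by (intro sum.mono_neutral_left) auto
    also have "\<dots> = (A *\<^sub>v x) $ col"
      using A x col by (auto simp: scalar_prod_def lessThan_atLeast0 intro!: sum.cong)
    finally show "V.lincomb a (row A ` \<beta>) $ col = 0\<^sub>v n $ col" using Ax col by simp
  next
    show "dim_vec (V.lincomb a (row A ` \<beta>)) = dim_vec (0\<^sub>v n :: real vec)"
      using V.lincomb_dim[OF _ rc] fin by simp
  qed
  show ?thesis
  proof (rule ccontr)
    assume "\<not> (\<forall>b\<in>\<beta>. x $ b = 0)"
    then obtain b where b: "b \<in> \<beta>" "x $ b \<noteq> 0" by auto
    have "V.lin_dep (row A ` \<beta>)" unfolding V.lin_dep_def
      apply (rule exI[of _ "row A ` \<beta>"], rule exI[of _ a], rule exI[of _ "row A b"])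
      using fin lc b av by auto
    then show False using li by simp
  qed
qed



lemma pos_mono:
  assumes fin: "finite \<beta>" and a: "a \<in> \<beta>" and t: "t \<in> \<beta>"
  shows "a < t \<longleftrightarrow> pos_in \<beta> a < pos_in \<beta> t"
proof
  assume at: "a < t"
  have "{x \<in> \<beta>. x < a} \<subset> {x \<in> \<beta>. x < t}" using at a by auto
  then show "pos_in \<beta> a < pos_in \<beta> t" unfolding pos_in_def
    by (intro psubset_card_mono) (use fin in auto)
next
  assume p: "pos_in \<beta> a < pos_in \<beta> t"
  show "a < t"
  proof (rule ccontr)
    assume "\<not> a < t"
    then have "{x \<in> \<beta>. x < t} \<subseteq> {x \<in> \<beta>. x < a}" by auto
    then have "pos_in \<beta> t \<le> pos_in \<beta> a" unfolding pos_in_def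
      by (intro card_mono) (use fin in auto)
    then show False using p by simp
  qed
qed

lemma pos_inj: "finite \<beta> \<Longrightarrow> inj_on (pos_in \<beta>) \<beta>"
  by (intro inj_onI) (metis linorder_neq_iff pos_mono less_irrefl)

lemma pos_comp:
  assumes fin: "finite \<beta>" and ab: "\<alpha> \<subseteq> \<beta>" and t: "t \<in> \<alpha>"
  shows "pos_in (pos_in \<beta> ` \<alpha>) (pos_in \<beta> t) = pos_in \<alpha> t"
proof -
  have inj: "inj_on (pos_in \<beta>) \<alpha>" using pos_inj[OF fin] ab inj_on_subset by blast
  have "{a' \<in> pos_in \<beta> ` \<alpha>. a' < pos_in \<beta> t} = pos_in \<beta> ` {a \<in> \<alpha>. a < t}"
    using pos_mono[OF fin] ab t by auto
  then show ?thesis unfolding pos_in_def[of "pos_in \<beta> ` \<alpha>"]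
    using card_image[OF inj_on_subset[OF inj, of "{a \<in> \<alpha>. a < t}"]] by (simp add: pos_in_def)
qed

lemma RCv:
  fixes A :: "real mat"
  assumes A: "A \<in> carrier_mat n n" and sym: "A\<^sup>T = A" and rb: "rows_basis A \<beta>" and j: "j < n"
    and van: "\<forall>x\<in>mat_kernel A. \<forall>i\<in>\<alpha>. x $ i = 0" and ab: "\<alpha> \<subseteq> \<beta>"
  shows "\<exists>c. (\<forall>col<n. A $$ (j,col) = (\<Sum>b\<in>\<beta>. c b * A $$ (b,col))) \<and> (j \<notin> \<beta> \<longrightarrow> (\<forall>i\<in>\<alpha>. c i = 0))"
proof -
  obtain c where c: "\<forall>col<n. A $$ (j,col) = (\<Sum>b\<in>\<beta>. c b * A $$ (b,col))" using RC[OF A rb j] by blast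
  have bn: "\<beta> \<subseteq> {..<n}" using rb A unfolding rows_basis_def by auto
  have fin: "finite \<beta>" using bn finite_subset by blast
  have symA: "A $$ (b,col) = A $$ (col,b)" if "b < n" "col < n" for b col
  proof -
    have "A\<^sup>T $$ (col,b) = A $$ (b,col)" using that A by simp
    then show ?thesis using sym by simp
  qed
  have "\<forall>i\<in>\<alpha>. c i = 0" if jb: "j \<notin> \<beta>"
  proof -
    define z where "z = vec n (\<lambda>t. (if t = j then 1 else 0) - (if t \<in> \<beta> then c t else (0::real)))"
    have zc: "z \<in> carrier_vec n" unfolding z_def by simp
    have "A *\<^sub>v z = 0\<^sub>v n"
    proof (intro eq_vecI)
      fix r assume "r < dim_vec (0\<^sub>v n :: real vec)" hence r: "r < n" by simp
      have "(A *\<^sub>v z) $ r = (\<Sum>t<n. A $$ (r,t) * ((if t = j then 1 else 0) - (if t \<in> \<beta> then c t else 0)))"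
        using A r unfolding z_def by (auto simp: scalar_prod_def lessThan_atLeast0 intro!: sum.cong)
      also have "\<dots> = (\<Sum>t<n. if t = j then A $$ (r,t) else 0) - (\<Sum>t<n. if t \<in> \<beta> then c t * A $$ (r,t) else 0)"
        unfolding sum_subtractf[symmetric] by (intro sum.cong) (auto simp: algebra_simps)
      also have "(\<Sum>t<n. if t = j then A $$ (r,t) else 0) = A $$ (r,j)" using j by (simp add: sum.delta)
      also have "(\<Sum>t<n. if t \<in> \<beta> then c t * A $$ (r,t) else 0) = (\<Sum>t\<in>\<beta>. c t * A $$ (r,t))"
      proof -
        have "{..<n} \<inter> \<beta> = \<beta>" using bn by auto
        then show ?thesis by (simp add: sum.inter_restrict[symmetric])
      qed
      also have "A $$ (r,j) = (\<Sum>t\<in>\<beta>. c t * A $$ (r,t))"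
        using symA[OF r j] c r symA bn by (auto intro!: sum.cong)
      finally show "(A *\<^sub>v z) $ r = 0\<^sub>v n $ r" using r by simp
    qed (use A in auto)
    then have "z \<in> mat_kernel A" using zc by (auto intro: mat_kernelI[OF A])
    then have "\<forall>i\<in>\<alpha>. z $ i = 0" using van by auto
    moreover have "z $ i = - c i" if "i \<in> \<alpha>" for i
    proof -
      have "i \<in> \<beta>" using that ab by auto
      then have "i < n" "i \<noteq> j" using bn jb by auto
      then show ?thesis using \<open>i \<in> \<beta>\<close> unfolding z_def by simp
    qed
    ultimately show ?thesis by auto
  qed
  then show ?thesis using c by blast
qed



theorem corollary2p3:
  fixes A :: "real mat" and n :: nat and \<alpha> \<beta> :: "nat set"
  assumes "A \<in> carrier_mat n n"
    and "A\<^sup>T = A"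
    and "\<alpha> \<subseteq> {..<n}" and "\<beta> \<subseteq> {..<n}"
    and "\<forall>i\<in>\<alpha>. P_vertex A i"
    and "\<alpha> \<subseteq> \<beta>"
    and "rows_basis A \<beta>"
    and "P_set (princ_sub A \<beta>) (pos_in \<beta> ` \<alpha>)"
  shows "P_set A \<alpha>"
proof -
  note A = assms(1) and sym = assms(2) and an = assms(3) and bn = assms(4)
    and Pv = assms(5) and ab = assms(6) and rb = assms(7) and Ps = assms(8)
  have finb: "finite \<beta>" using bn finite_subset by blast
  have fina: "finite \<alpha>" using an finite_subset by blast
  have van: "\<forall>x\<in>mat_kernel A. \<forall>i\<in>\<alpha>. x $ i = 0"
  proof (intro ballI)
    fix x i assume x: "x \<in> mat_kernel A" and i: "i \<in> \<alpha>"
    have "i < n" "nullity (del_princ A {i}) = nullity A + 1"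
      using Pv i A unfolding P_vertex_def by auto
    from null_vanish[OF A this] x show "x $ i = 0" by auto
  qed
  have rcv: "\<And>j. j < n \<Longrightarrow> \<exists>c. (\<forall>col<n. A $$ (j,col) = (\<Sum>b\<in>\<beta>. c b * A $$ (b,col))) \<and> (j \<notin> \<beta> \<longrightarrow> (\<forall>i\<in>\<alpha>. c i = 0))"
    using RCv[OF A sym rb _ van ab] by blast
  define r where "r = card {i. i < n \<and> i \<in> \<beta>}"
  have rb': "{i. i < n \<and> i \<in> \<beta>} = \<beta>" using bn by auto
  define S where "S = submatrix A \<beta> \<beta>"
  have Sc: "S \<in> carrier_mat r r" unfolding S_def r_def by (rule sub_carrier[OF A])
  define \<alpha>' where "\<alpha>' = pos_in \<beta> ` \<alpha>"
  have a'r: "\<alpha>' \<subseteq> {..<r}" unfolding \<alpha>'_def r_def using pos_props(1)[of _ \<beta> n] ab bn by auto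
  have inja: "inj_on (pos_in \<beta>) \<alpha>" using pos_inj[OF finb] ab inj_on_subset by blast
  define k where "k = card \<alpha>"
  have ca': "card \<alpha>' = k" unfolding \<alpha>'_def k_def using card_image[OF inja] .
  define ka where "ka = card {i. i < n \<and> i \<in> \<alpha>}"
  have ka: "ka = k"
  proof -
    have "{i. i < n \<and> i \<in> \<alpha>} = \<alpha>" using an by auto
    then show ?thesis unfolding ka_def k_def by simp
  qed
  have kb: "card {i. i < r \<and> i \<in> \<alpha>'} = k"
  proof -
    have "{i. i < r \<and> i \<in> \<alpha>'} = \<alpha>'" using a'r by auto
    then show ?thesis using ca' by simp
  qed
  have memb: "pos_in \<beta> b \<in> \<alpha>' \<longleftrightarrow> b \<in> \<alpha>" if "b \<in> \<beta>" for b
  proof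
    assume "pos_in \<beta> b \<in> \<alpha>'"
    then obtain a where a: "a \<in> \<alpha>" "pos_in \<beta> b = pos_in \<beta> a" unfolding \<alpha>'_def by auto
    then have "b = a" using pos_inj[OF finb] that ab unfolding inj_on_def by auto
    then show "b \<in> \<alpha>" using a by simp
  qed (auto simp: \<alpha>'_def)
  have kerS: "mat_kernel S = {0\<^sub>v r}"
  proof (intro equalityI subsetI)
    fix u assume u: "u \<in> mat_kernel S"
    have uc: "u \<in> carrier_vec r" and Su: "S *\<^sub>v u = 0\<^sub>v r" using mat_kernelD[OF Sc u] by auto
    have uc': "u \<in> carrier_vec (card {j. j < n \<and> j \<in> \<beta>})" using uc r_def by simp
    let ?x = "emb \<beta> n u"
    have Axb: "(A *\<^sub>v ?x) $ b = 0" if b: "b \<in> \<beta>" for b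
    proof -
      have bn': "b < n" using b bn by auto
      have s: "pos_in \<beta> b < r" using pos_props(1)[OF b bn'] r_def by simp
      have "(S *\<^sub>v u) $ pos_in \<beta> b = (A *\<^sub>v ?x) $ pick \<beta> (pos_in \<beta> b)"
        unfolding S_def by (rule mult_submatrix_emb[OF A uc']) (use s r_def in simp)
      then show ?thesis using pos_props(2)[OF b bn'] Su s by simp
    qed
    have Ax: "A *\<^sub>v ?x = 0\<^sub>v n"
    proof (intro eq_vecI)
      fix j assume "j < dim_vec (0\<^sub>v n :: real vec)" hence j: "j < n" by simp
      obtain c where c: "\<forall>col<n. A $$ (j,col) = (\<Sum>b\<in>\<beta>. c b * A $$ (b,col))" using rcv[OF j] by blast
      have "(A *\<^sub>v ?x) $ j = (\<Sum>b\<in>\<beta>. c b * (A *\<^sub>v ?x) $ b)"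
        by (rule row_comb_mult[OF A emb_carrier c j finb bn])
      then show "(A *\<^sub>v ?x) $ j = 0\<^sub>v n $ j" using Axb j by simp
    qed (use A in auto)
    have "\<forall>b\<in>\<beta>. ?x $ b = 0"
      by (rule IND[OF A sym rb emb_carrier Ax]) (auto simp: emb_index)
    then have "u = 0\<^sub>v r"
    proof (intro eq_vecI)
      fix s assume "\<forall>b\<in>\<beta>. ?x $ b = 0" "s < dim_vec (0\<^sub>v r :: real vec)"
      then have s: "s < card {j. j < n \<and> j \<in> \<beta>}" "\<forall>b\<in>\<beta>. ?x $ b = 0" using r_def by auto
      have "u $ s = ?x $ pick \<beta> s" using emb_pick[OF s(1)] by simp
      then show "u $ s = 0\<^sub>v r $ s" using s pick_props(1)[OF s(1)] r_def by simp
    qed (use uc in auto)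
    then show "u \<in> {0\<^sub>v r}" by simp
  next
    fix u :: "real vec" assume "u \<in> {0\<^sub>v r}"
    then show "u \<in> mat_kernel S" using mult_zero_vec'[OF Sc] by (auto intro: mat_kernelI[OF Sc])
  qed
  have kdS: "kernel_dim S = 0"
  proof -
    have "kernel_dim S = kernel_dim (1\<^sub>m r :: real mat)"
    proof (rule kernel_dim_eqI)
      have I: "1\<^sub>m r \<in> carrier_mat r r" by simp
      have "mat_kernel (1\<^sub>m r :: real mat) = {0\<^sub>v r}" unfolding mat_kernel[OF I] by auto
      then show "mat_kernel S = mat_kernel (1\<^sub>m r)" using kerS by simp
      show "dim_col S = dim_col (1\<^sub>m r :: real mat)" using Sc by simp
    qed
    then show ?thesis using kernel_dim_one by simp
  qed
  define m1 where "m1 = card {j. j < r \<and> j \<in> -\<alpha>'}"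
  define M1 where "M1 = submatrix S (-\<alpha>') (-\<alpha>')"
  define C1 where "C1 = submatrix S UNIV (-\<alpha>')"
  define B1 where "B1 = submatrix S \<alpha>' (-\<alpha>')"
  have M1c: "M1 \<in> carrier_mat m1 m1" unfolding M1_def m1_def by (rule sub_carrier[OF Sc])
  have C1c: "C1 \<in> carrier_mat r m1" using sub_carrier[OF Sc, of UNIV "-\<alpha>'"] unfolding C1_def m1_def by simp
  have B1c: "B1 \<in> carrier_mat k m1" using sub_carrier[OF Sc, of \<alpha>' "-\<alpha>'"] kb unfolding B1_def m1_def by simp
  have ks1: "mat_kernel C1 = {y \<in> mat_kernel M1. B1 *\<^sub>v y = 0\<^sub>v k}"
    using ker_split[OF Sc, of "-\<alpha>'" \<alpha>'] kb unfolding C1_def M1_def B1_def by simp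
  have kdM1: "kernel_dim M1 = k"
    using Ps kdS ca' unfolding P_set_def princ_sub_def del_princ_def nullity_def M1_def S_def \<alpha>'_def by simp
  have kerC1: "mat_kernel C1 = {0\<^sub>v m1}"
  proof (intro equalityI subsetI)
    fix y assume y: "y \<in> mat_kernel C1"
    have yc: "y \<in> carrier_vec m1" and C1y: "C1 *\<^sub>v y = 0\<^sub>v r" using mat_kernelD[OF C1c y] by auto
    have yc': "y \<in> carrier_vec (card {j. j < r \<and> j \<in> -\<alpha>'})" using yc m1_def by simp
    let ?u = "emb (-\<alpha>') r y"
    have "S *\<^sub>v ?u = 0\<^sub>v r"
    proof (intro eq_vecI)
      fix s assume "s < dim_vec (0\<^sub>v r :: real vec)" hence s: "s < r" by simp
      have "(C1 *\<^sub>v y) $ s = (S *\<^sub>v ?u) $ s"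
        unfolding C1_def using mult_submatrix_emb[OF Sc yc', of s UNIV] s by (simp add: pick_UNIV)
      then show "(S *\<^sub>v ?u) $ s = 0\<^sub>v r $ s" using C1y s by simp
    qed (use Sc in auto)
    then have "?u \<in> mat_kernel S" by (intro mat_kernelI[OF Sc]) auto
    then have u0: "?u = 0\<^sub>v r" using kerS by simp
    have "y = 0\<^sub>v m1"
    proof (intro eq_vecI)
      fix q assume "q < dim_vec (0\<^sub>v m1 :: real vec)" hence q: "q < m1" by simp
      have "y $ q = ?u $ pick (-\<alpha>') q" using emb_pick[of q r "-\<alpha>'" y] q m1_def by simp
      also have "\<dots> = 0" using u0 pick_props(2)[of q r "-\<alpha>'"] q m1_def by simp
      finally show "y $ q = 0\<^sub>v m1 $ q" using q by simp
    qed (use yc in auto)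
    then show "y \<in> {0\<^sub>v m1}" by simp
  next
    fix y :: "real vec" assume "y \<in> {0\<^sub>v m1}"
    then show "y \<in> mat_kernel C1" using mult_zero_vec'[OF C1c] by (auto intro: mat_kernelI[OF C1c])
  qed
  have kdC1: "kernel_dim C1 = 0"
  proof -
    have "kernel_dim C1 = kernel_dim (1\<^sub>m m1 :: real mat)"
    proof (rule kernel_dim_eqI)
      have I: "1\<^sub>m m1 \<in> carrier_mat m1 m1" by simp
      have "mat_kernel (1\<^sub>m m1 :: real mat) = {0\<^sub>v m1}" unfolding mat_kernel[OF I] by auto
      then show "mat_kernel C1 = mat_kernel (1\<^sub>m m1)" using kerC1 by simp
      show "dim_col C1 = dim_col (1\<^sub>m m1 :: real mat)" using C1c by simp
    qed
    then show ?thesis using kernel_dim_one by simp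
  qed
  have surj1: "\<forall>v\<in>carrier_vec k. \<exists>y\<in>mat_kernel M1. B1 *\<^sub>v y = v"
    by (rule kdim_split(3)[OF M1c C1c B1c ks1]) (simp add: kdM1 kdC1)
  define m2 where "m2 = card {j. j < n \<and> j \<in> -\<alpha>}"
  define M2 where "M2 = submatrix A (-\<alpha>) (-\<alpha>)"
  define C2 where "C2 = submatrix A UNIV (-\<alpha>)"
  define B2 where "B2 = submatrix A \<alpha> (-\<alpha>)"
  have M2c: "M2 \<in> carrier_mat m2 m2" unfolding M2_def m2_def by (rule sub_carrier[OF A])
  have C2c: "C2 \<in> carrier_mat n m2" using sub_carrier[OF A, of UNIV "-\<alpha>"] unfolding C2_def m2_def by simp
  have B2c: "B2 \<in> carrier_mat k m2" using sub_carrier[OF A, of \<alpha> "-\<alpha>"] ka unfolding B2_def m2_def ka_def by simp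
  have ks2: "mat_kernel C2 = {y \<in> mat_kernel M2. B2 *\<^sub>v y = 0\<^sub>v k}"
    using ker_split[OF A, of "-\<alpha>" \<alpha>] ka unfolding C2_def M2_def B2_def ka_def by simp
  have surj2: "\<forall>v\<in>carrier_vec k. \<exists>x'\<in>mat_kernel M2. B2 *\<^sub>v x' = v"
  proof
    fix v :: "real vec" assume v: "v \<in> carrier_vec k"
    obtain y where y: "y \<in> mat_kernel M1" "B1 *\<^sub>v y = v" using surj1 v by blast
    have yc: "y \<in> carrier_vec m1" and M1y: "M1 *\<^sub>v y = 0\<^sub>v m1" using mat_kernelD[OF M1c y(1)] by auto
    have yc': "y \<in> carrier_vec (card {j. j < r \<and> j \<in> -\<alpha>'})" using yc m1_def by simp
    define u where "u = emb (-\<alpha>') r y"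
    have uc': "u \<in> carrier_vec (card {j. j < n \<and> j \<in> \<beta>})" unfolding u_def r_def by simp
    define x where "x = emb \<beta> n u"
    have Su: "(S *\<^sub>v u) $ s = (if s \<in> \<alpha>' then v $ pos_in \<alpha>' s else 0)" if s: "s < r" for s
    proof (cases "s \<in> \<alpha>'")
      case True
      have q: "pos_in \<alpha>' s < card {i. i < r \<and> i \<in> \<alpha>'}" "pick \<alpha>' (pos_in \<alpha>' s) = s"
        using pos_props[OF True s] by auto
      have "(B1 *\<^sub>v y) $ pos_in \<alpha>' s = (S *\<^sub>v u) $ s"
        unfolding B1_def u_def using mult_submatrix_emb[OF Sc yc' q(1)] q(2) by simp
      then show ?thesis using y(2) True by simp
    next
      case False
      then have F: "s \<in> -\<alpha>'" by simp
      have q: "pos_in (-\<alpha>') s < m1" "pick (-\<alpha>') (pos_in (-\<alpha>') s) = s"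
        using pos_props[OF F s] m1_def by auto
      have "(M1 *\<^sub>v y) $ pos_in (-\<alpha>') s = (S *\<^sub>v u) $ s"
        unfolding M1_def u_def using mult_submatrix_emb[OF Sc yc', of "pos_in (-\<alpha>') s" "-\<alpha>'"] q m1_def by simp
      then show ?thesis using M1y False q by simp
    qed
    have Axb: "(A *\<^sub>v x) $ b = (if b \<in> \<alpha> then v $ pos_in \<alpha> b else 0)" if b: "b \<in> \<beta>" for b
    proof -
      have bn': "b < n" using b bn by auto
      have s: "pos_in \<beta> b < r" using pos_props(1)[OF b bn'] r_def by simp
      have "(S *\<^sub>v u) $ pos_in \<beta> b = (A *\<^sub>v x) $ pick \<beta> (pos_in \<beta> b)"
        unfolding S_def x_def by (rule mult_submatrix_emb[OF A uc']) (use s r_def in simp)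
      then have "(A *\<^sub>v x) $ b = (S *\<^sub>v u) $ pos_in \<beta> b" using pos_props(2)[OF b bn'] by simp
      also have "\<dots> = (if b \<in> \<alpha> then v $ pos_in \<alpha> b else 0)"
        using Su[OF s] memb[OF b] pos_comp[OF finb ab, of b] unfolding \<alpha>'_def by auto
      finally show ?thesis .
    qed
    have Axj: "(A *\<^sub>v x) $ j = 0" if j: "j < n" "j \<notin> \<alpha>" for j
    proof (cases "j \<in> \<beta>")
      case True
      then show ?thesis using Axb j by simp
    next
      case False
      obtain c where c: "\<forall>col<n. A $$ (j,col) = (\<Sum>b\<in>\<beta>. c b * A $$ (b,col))" "\<forall>i\<in>\<alpha>. c i = 0"
        using rcv[OF j(1)] False by blast
      have "(A *\<^sub>v x) $ j = (\<Sum>b\<in>\<beta>. c b * (A *\<^sub>v x) $ b)"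
        unfolding x_def by (rule row_comb_mult[OF A emb_carrier c(1) j(1) finb bn])
      also have "\<dots> = 0" using Axb c(2) unfolding x_def by (intro sum.neutral) auto
      finally show ?thesis .
    qed
    have xz: "x $ t = 0" if t: "t < n" "t \<notin> -\<alpha>" for t
    proof -
      have ta: "t \<in> \<alpha>" using t by simp
      then have tb: "t \<in> \<beta>" using ab by auto
      have s: "pos_in \<beta> t < r" using pos_props(1)[OF tb t(1)] r_def by simp
      have "x $ t = u $ pos_in \<beta> t" unfolding x_def using tb t by (simp add: emb_index)
      also have "\<dots> = 0" unfolding u_def using s memb[OF tb] ta by (simp add: emb_index)
      finally show ?thesis .
    qed
    define x' where "x' = rst (-\<alpha>) n x"
    have x'c': "x' \<in> carrier_vec (card {j. j < n \<and> j \<in> -\<alpha>})" unfolding x'_def by (rule rst_carrier)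
    have x'c: "x' \<in> carrier_vec m2" using x'c' unfolding m2_def .
    have ex: "emb (-\<alpha>) n x' = x" unfolding x'_def by (rule emb_rst) (use xz in \<open>auto simp: x_def\<close>)
    have "M2 *\<^sub>v x' = 0\<^sub>v m2"
    proof (intro eq_vecI)
      fix q assume "q < dim_vec (0\<^sub>v m2 :: real vec)" hence q: "q < m2" by simp
      have "(M2 *\<^sub>v x') $ q = (A *\<^sub>v x) $ pick (-\<alpha>) q"
        unfolding M2_def using mult_submatrix_emb[OF A x'c', of q "-\<alpha>"] q ex m2_def by simp
      also have "\<dots> = 0" using Axj pick_props(1,2)[of q n "-\<alpha>"] q m2_def by simp
      finally show "(M2 *\<^sub>v x') $ q = 0\<^sub>v m2 $ q" using q by simp
    qed (use M2c in auto)
    then have "x' \<in> mat_kernel M2" by (rule mat_kernelI[OF M2c x'c])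
    moreover have "B2 *\<^sub>v x' = v"
    proof (intro eq_vecI)
      fix q assume "q < dim_vec v" hence q: "q < k" using v by simp
      have q': "q < card {i. i < n \<and> i \<in> \<alpha>}" using q ka ka_def by simp
      have "(B2 *\<^sub>v x') $ q = (A *\<^sub>v x) $ pick \<alpha> q"
        unfolding B2_def using mult_submatrix_emb[OF A x'c' q'] ex by simp
      also have "\<dots> = v $ q" using Axb[of "pick \<alpha> q"] pick_props[OF q'] ab by auto
      finally show "(B2 *\<^sub>v x') $ q = v $ q" .
    qed (use B2c v in auto)
    ultimately show "\<exists>x'\<in>mat_kernel M2. B2 *\<^sub>v x' = v" by blast
  qed
  have kd2: "kernel_dim M2 = kernel_dim C2 + k" by (rule kdim_split(2)[OF M2c C2c B2c ks2 surj2])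
  have kz: "mat_kernel (zrows A \<alpha>) = {x \<in> mat_kernel A. \<forall>t<n. t \<notin> -\<alpha> \<longrightarrow> x $ t = 0}"
    unfolding zrows_ker[OF A] by auto
  have kd3: "kernel_dim C2 = kernel_dim (zrows A \<alpha>)"
    unfolding C2_def by (rule kdim_restrict[OF A zrows_carrier[OF A] kz])
  have kd4: "kernel_dim (zrows A \<alpha>) = kernel_dim A"
  proof (rule kernel_dim_eqI)
    show "mat_kernel (zrows A \<alpha>) = mat_kernel A" unfolding zrows_ker[OF A] using van by auto
    show "dim_col (zrows A \<alpha>) = dim_col A" using zrows_carrier[OF A, of \<alpha>] A by (simp add: carrier_matD)
  qed
  show ?thesis
    unfolding P_set_def nullity_def del_princ_def
    using kd2 kd3 kd4 an A unfolding M2_def k_def by auto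
qed

end
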